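(* The operator $\log S^t=\sum_{k=1}^\infty\frac{(-1)^{k-1}}{k}(S^t-1)^k$ is well defined on $\mathfrak{h}^1[t]$ (on each word only finitely many terms are nonzero), and for every word $w$ of length $n$, \[(\log S^t)(w)=t\sum_{r\in R_n,\ \sigma(r)=1}\mathrm{Con}_r(w)=t\,(\log S)(w),\] where $S=S^1$ is obtained by substituting $t=1$.
   Context: Let $\mathfrak{A}$ be a commutative $\mathbb{Q}$-algebra, $A$ a set of letters, and $\mathfrak{h}^1$ the non-commutative polynomial algebra over $\mathfrak{A}$ in the letters of $A$ (the free $\mathfrak{A}$-module on words, i.e. finite sequences of letters including the empty word $1$, with concatenation product). Let $\mathfrak{z}\subset\mathfrak{h}^1$ be the $\mathfrak{A}$-submodule spanned by $A$, and assume $\mathfrak{z}$ carries a commutative associative (not necessarily unital) $\mathfrak{A}$-bilinear product $\circ\colon\mathfrak{z}\times\mathfrak{z}\to\mathfrak{z}$. This is extended to an action of $\mathfrak{z}$ on $\mathfrak{h}^1$ by $a\circ 1=0$ and $a\circ(bw)=(a\circ b)w$ for $a,b\in A$ and words $w$, extended $\mathfrak{A}$-bilinearly. Let $t$ be an indeterminate, $\mathfrak{h}^1[t]=\mathfrak{h}^1\otimes_{\mathbb{Q}}\mathbb{Q}[t]$, with all structures extended $\mathfrak{A}[t]$-linearly. Define the $\mathfrak{A}[t]$-linear operator $S^t$ on $\mathfrak{h}^1[t]$ by $S^t(1)=1$ and $S^t(aw)=aS^t(w)+t\,a\circ S^t(w)$ for $a\in A$ and words $w$; for an element $\alpha$ of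 a commutative $\mathfrak{A}$-algebra, $S^\alpha$ denotes the operator obtained by substituting $\alpha$ for $t$. For $n\geq 0$, let $R_n$ be the set of strictly increasing sequences $r=(r_0,\ldots,r_s)$ of integers in $\{0,\ldots,n\}$ with $r_0=0$, $r_s=n$; put $\sigma(r)=n-s$. For a word $w=a_1\cdots a_n$, $\mathrm{Con}_r(w)=b_1\cdots b_s$ with $b_i=a_{r_{i-1}+1}\circ\cdots\circ a_{r_i}$. *)

theory Defs
  imports "HOL-Library.Poly_Mapping" "HOL-Computational_Algebra.Polynomial"
begin

text \<open>Elements of the free module over a coefficient ring 'b with basis 'k are
  finitely supported maps 'k =>0 'b. Words are lists of letters; letters are the
  elements of the type 'a. h1 = ('a list =>0 'r), h1[t] = ('a list =>0 'r poly),
  z = ('a =>0 'r).\<close>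

definition smultp :: "'b::comm_ring_1 \<Rightarrow> ('k \<Rightarrow>\<^sub>0 'b) \<Rightarrow> ('k \<Rightarrow>\<^sub>0 'b)" where
  "smultp c p = Poly_Mapping.map (\<lambda>x. c * x) p"

definition linext :: "('k \<Rightarrow> ('m \<Rightarrow>\<^sub>0 'b::comm_ring_1)) \<Rightarrow> ('k \<Rightarrow>\<^sub>0 'b) \<Rightarrow> ('m \<Rightarrow>\<^sub>0 'b)" where
  "linext f x = (\<Sum>k\<in>Poly_Mapping.keys x. smultp (Poly_Mapping.lookup x k) (f k))"

text \<open>Bilinear extension to z of the product of letters
  (circ a b is the element a \<circ> b of z).\<close>
definition circZ :: "('a \<Rightarrow> 'a \<Rightarrow> ('a \<Rightarrow>\<^sub>0 'r::comm_ring_1)) \<Rightarrow> ('a \<Rightarrow>\<^sub>0 'r) \<Rightarrow> ('a \<Rightarrow>\<^sub>0 'r) \<Rightarrow> ('a \<Rightarrow>\<^sub>0 'r)" where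
  "circZ circ x y = linext (\<lambda>a. linext (\<lambda>b. circ a b) y) x"

text \<open>Coefficient extension along a ring map \<iota> (\<iota> = id for h1, \<iota> = constant
  polynomial for h1[t]).\<close>
definition embedc :: "('r::zero \<Rightarrow> 'b::zero) \<Rightarrow> ('k \<Rightarrow>\<^sub>0 'r) \<Rightarrow> ('k \<Rightarrow>\<^sub>0 'b)" where
  "embedc \<iota> x = Poly_Mapping.map \<iota> x"

definition circW :: "('a \<Rightarrow> 'a \<Rightarrow> ('a \<Rightarrow>\<^sub>0 'r::comm_ring_1)) \<Rightarrow> ('r \<Rightarrow> 'b::comm_ring_1) \<Rightarrow> 'a
     \<Rightarrow> ('a list \<Rightarrow>\<^sub>0 'b) \<Rightarrow> ('a list \<Rightarrow>\<^sub>0 'b)" where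
  "circW circ \<iota> a x = linext (\<lambda>u. case u of [] \<Rightarrow> 0
       | b # v \<Rightarrow> linext (\<lambda>c. Poly_Mapping.single (c # v) 1) (embedc \<iota> (circ a b))) x"

definition prepend :: "'a \<Rightarrow> ('a list \<Rightarrow>\<^sub>0 'b::comm_ring_1) \<Rightarrow> ('a list \<Rightarrow>\<^sub>0 'b)" where
  "prepend a x = linext (\<lambda>u. Poly_Mapping.single (a # u) 1) x"

fun Sword :: "('a \<Rightarrow> 'a \<Rightarrow> ('a \<Rightarrow>\<^sub>0 'r::comm_ring_1)) \<Rightarrow> ('r \<Rightarrow> 'b::comm_ring_1) \<Rightarrow> 'b
     \<Rightarrow> 'a list \<Rightarrow> ('a list \<Rightarrow>\<^sub>0 'b)" where
  "Sword circ \<iota> \<alpha> [] = Poly_Mapping.single [] 1"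
| "Sword circ \<iota> \<alpha> (a # w) = prepend a (Sword circ \<iota> \<alpha> w) + smultp \<alpha> (circW circ \<iota> a (Sword circ \<iota> \<alpha> w))"

definition Sop :: "('a \<Rightarrow> 'a \<Rightarrow> ('a \<Rightarrow>\<^sub>0 'r::comm_ring_1)) \<Rightarrow> ('r \<Rightarrow> 'b::comm_ring_1) \<Rightarrow> 'b
     \<Rightarrow> ('a list \<Rightarrow>\<^sub>0 'b) \<Rightarrow> ('a list \<Rightarrow>\<^sub>0 'b)" where
  "Sop circ \<iota> \<alpha> = linext (Sword circ \<iota> \<alpha>)"

definition minus_id :: "(('k \<Rightarrow>\<^sub>0 'b::comm_ring_1) \<Rightarrow> ('k \<Rightarrow>\<^sub>0 'b)) \<Rightarrow> ('k \<Rightarrow>\<^sub>0 'b) \<Rightarrow> ('k \<Rightarrow>\<^sub>0 'b)" where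
  "minus_id L x = L x - x"

definition ninv :: "nat \<Rightarrow> 'b::comm_ring_1" where
  "ninv k = (THE y. of_nat k * y = 1)"

definition log_terms :: "(('k \<Rightarrow>\<^sub>0 'b::comm_ring_1) \<Rightarrow> ('k \<Rightarrow>\<^sub>0 'b)) \<Rightarrow> ('k \<Rightarrow>\<^sub>0 'b) \<Rightarrow> nat set" where
  "log_terms L x = {k. 1 \<le> k \<and> (minus_id L ^^ k) x \<noteq> 0}"

text \<open>log L (x) = sum_{k \<ge> 1} (-1)^(k-1)/k (L-1)^k x, as a sum over the (finite) set of
  nonzero terms.\<close>
definition logop :: "(('k \<Rightarrow>\<^sub>0 'b::comm_ring_1) \<Rightarrow> ('k \<Rightarrow>\<^sub>0 'b)) \<Rightarrow> ('k \<Rightarrow>\<^sub>0 'b) \<Rightarrow> ('k \<Rightarrow>\<^sub>0 'b)" where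
  "logop L x = (\<Sum>k\<in>log_terms L x. smultp ((-1) ^ (k - 1) * ninv k) ((minus_id L ^^ k) x))"

definition cat :: "('a list \<Rightarrow>\<^sub>0 'b::comm_ring_1) \<Rightarrow> ('a list \<Rightarrow>\<^sub>0 'b) \<Rightarrow> ('a list \<Rightarrow>\<^sub>0 'b)" where
  "cat x y = linext (\<lambda>u. linext (\<lambda>v. Poly_Mapping.single (u @ v) 1) y) x"

fun zprod :: "('a \<Rightarrow> 'a \<Rightarrow> ('a \<Rightarrow>\<^sub>0 'r::comm_ring_1)) \<Rightarrow> 'a list \<Rightarrow> ('a \<Rightarrow>\<^sub>0 'r)" where
  "zprod circ [] = 0"
| "zprod circ [a] = Poly_Mapping.single a 1"
| "zprod circ (a # b # as) = circZ circ (Poly_Mapping.single a 1) (zprod circ (b # as))"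

fun zword :: "('a \<Rightarrow>\<^sub>0 'r::comm_ring_1) list \<Rightarrow> ('a list \<Rightarrow>\<^sub>0 'r)" where
  "zword [] = Poly_Mapping.single [] 1"
| "zword (z # zs) = cat (linext (\<lambda>c. Poly_Mapping.single [c] 1) z) (zword zs)"

definition Rset :: "nat \<Rightarrow> nat list set" where
  "Rset n = {r. r \<noteq> [] \<and> sorted_wrt (<) r \<and> hd r = 0 \<and> last r = n \<and> set r \<subseteq> {0..n}}"

definition sigma :: "nat \<Rightarrow> nat list \<Rightarrow> nat" where
  "sigma n r = n - (length r - 1)"

text \<open>Con_r(w) = b_1...b_s, b_i = a_{r_(i-1)+1} \<circ> ... \<circ> a_{r_i}.\<close>
definition Con :: "('a \<Rightarrow> 'a \<Rightarrow> ('a \<Rightarrow>\<^sub>0 'r::comm_ring_1)) \<Rightarrow> nat list \<Rightarrow> 'a list \<Rightarrow> ('a list \<Rightarrow>\<^sub>0 'r)" where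
  "Con circ r w = zword (map (\<lambda>i. zprod circ (take (r ! (i+1) - r ! i) (drop (r ! i) w)))
                              [0..<length r - 1])"

end

theory Submission imports Defs begin

lemma lookup_smultp[simp]: "Poly_Mapping.lookup (smultp c p) k = c * Poly_Mapping.lookup p k"
  by (simp add: smultp_def map.rep_eq when_def)

lemma smultp_0[simp]: "smultp 0 x = 0"
  by (rule poly_mapping_eqI) simp
lemma smultp_0_right[simp]: "smultp c 0 = 0"
  by (rule poly_mapping_eqI) simp
lemma smultp_1[simp]: "smultp 1 x = x"
  by (rule poly_mapping_eqI) simp
lemma smultp_add_left: "smultp (c + d) x = smultp c x + smultp d x"
  by (rule poly_mapping_eqI) (simp add: lookup_add algebra_simps)
lemma smultp_add_right: "smultp c (x + y) = smultp c x + smultp c y"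
  by (rule poly_mapping_eqI) (simp add: lookup_add algebra_simps)
lemma smultp_diff_right: "smultp c (x - y) = smultp c x - smultp c y"
  by (rule poly_mapping_eqI) (simp add: lookup_minus algebra_simps)
lemma smultp_smultp[simp]: "smultp c (smultp d x) = smultp (c * d) x"
  by (rule poly_mapping_eqI) (simp add: algebra_simps)
lemma smultp_sum_right: "smultp c (\<Sum>i\<in>I. f i) = (\<Sum>i\<in>I. smultp c (f i))"
  by (rule poly_mapping_eqI) (simp add: lookup_sum sum_distrib_left)
lemma smultp_sum_left: "smultp (\<Sum>i\<in>I. f i) x = (\<Sum>i\<in>I. smultp (f i) x)"
  by (rule poly_mapping_eqI) (simp add: lookup_sum sum_distrib_right)
lemma smultp_single: "smultp c (Poly_Mapping.single k d) = Poly_Mapping.single k (c * d)"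
  by (rule poly_mapping_eqI) (simp add: lookup_single when_def)

lemma lookup_linext: "Poly_Mapping.lookup (linext f x) m = (\<Sum>k\<in>Poly_Mapping.keys x. Poly_Mapping.lookup x k * Poly_Mapping.lookup (f k) m)"
  by (simp add: linext_def lookup_sum)

lemma linext_superset:
  assumes "finite A" "Poly_Mapping.keys x \<subseteq> A"
  shows "linext f x = (\<Sum>k\<in>A. smultp (Poly_Mapping.lookup x k) (f k))"
  unfolding linext_def using assms
  by (intro sum.mono_neutral_left) (auto simp: in_keys_iff)

lemma keys_add_sub: "Poly_Mapping.keys (x + y) \<subseteq> Poly_Mapping.keys x \<union> Poly_Mapping.keys y"
  by (auto simp: in_keys_iff lookup_add)

lemma linext_add: "linext f (x + y) = linext f x + linext f y"
proof -
  let ?A = "Poly_Mapping.keys x \<union> Poly_Mapping.keys y"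
  have "linext f (x + y) = (\<Sum>k\<in>?A. smultp (Poly_Mapping.lookup (x+y) k) (f k))"
    by (rule linext_superset) (auto dest: set_mp[OF keys_add_sub])
  also have "\<dots> = (\<Sum>k\<in>?A. smultp (Poly_Mapping.lookup x k) (f k)) + (\<Sum>k\<in>?A. smultp (Poly_Mapping.lookup y k) (f k))"
    by (simp add: lookup_add smultp_add_left sum.distrib)
  also have "\<dots> = linext f x + linext f y"
    by (subst (1 2) linext_superset[of ?A]) auto
  finally show ?thesis .
qed

lemma linext_smultp: "linext f (smultp c x) = smultp c (linext f x)"
proof -
  have "linext f (smultp c x) = (\<Sum>k\<in>Poly_Mapping.keys x. smultp (Poly_Mapping.lookup (smultp c x) k) (f k))"
    by (rule linext_superset) (auto simp: in_keys_iff)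
  thus ?thesis by (simp add: linext_def smultp_sum_right)
qed

lemma linext_single[simp]: "linext f (Poly_Mapping.single k c) = smultp c (f k)"
proof -
  have "linext f (Poly_Mapping.single k c) = (\<Sum>k'\<in>{k}. smultp (Poly_Mapping.lookup (Poly_Mapping.single k c) k') (f k'))"
    by (rule linext_superset) auto
  thus ?thesis by simp
qed

lemma linext_zero[simp]: "linext f 0 = 0"
  by (simp add: linext_def)

lemma linext_fun_add: "linext (\<lambda>k. f k + g k) x = linext f x + linext g x"
  by (simp add: linext_def smultp_add_right sum.distrib)
lemma linext_fun_smultp: "linext (\<lambda>k. smultp c (f k)) x = smultp c (linext f x)"
  by (simp add: linext_def smultp_sum_right mult.commute)
lemma linext_fun_zero[simp]: "linext (\<lambda>k. 0) x = 0"
  by (simp add: linext_def)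

definition lin :: "(('k \<Rightarrow>\<^sub>0 'b::comm_ring_1) \<Rightarrow> ('m \<Rightarrow>\<^sub>0 'b)) \<Rightarrow> bool" where
  "lin F \<longleftrightarrow> (\<forall>x y. F (x + y) = F x + F y) \<and> (\<forall>c x. F (smultp c x) = smultp c (F x))"

lemma lin_add: "lin F \<Longrightarrow> F (x + y) = F x + F y" by (simp add: lin_def)
lemma lin_smultp: "lin F \<Longrightarrow> F (smultp c x) = smultp c (F x)" by (simp add: lin_def)
lemma lin_zero: "lin F \<Longrightarrow> F 0 = 0"
  using lin_smultp[of F 0 0] by simp
lemma smultp_m1: "smultp (-1) x = - x"
  by (rule poly_mapping_eqI) simp
lemma lin_diff: assumes F: "lin F" shows "F (x - y) = F x - F y"
proof -
  have "F (x - y) = F (x + smultp (-1) y)" by (simp add: smultp_m1)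
  also have "\<dots> = F x + smultp (-1) (F y)" using F by (simp only: lin_add lin_smultp)
  also have "\<dots> = F x - F y" by (simp add: smultp_m1)
  finally show ?thesis .
qed
lemma lin_sum: "lin F \<Longrightarrow> F (\<Sum>i\<in>I. g i) = (\<Sum>i\<in>I. F (g i))"
  by (induction I rule: infinite_finite_induct) (auto simp: lin_zero lin_add)

lemma lin_linext: "lin (linext f)"
  by (simp add: lin_def linext_add linext_smultp)
lemma lin_id: "lin (\<lambda>x. x)" by (simp add: lin_def)
lemma lin_comp: "lin F \<Longrightarrow> lin G \<Longrightarrow> lin (\<lambda>x. F (G x))"
  by (simp add: lin_def)
lemma lin_plus: "lin F \<Longrightarrow> lin G \<Longrightarrow> lin (\<lambda>x. F x + G x)"
  by (simp add: lin_def smultp_add_right algebra_simps)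
lemma lin_minus: "lin F \<Longrightarrow> lin G \<Longrightarrow> lin (\<lambda>x. F x - G x)"
  by (simp add: lin_def smultp_diff_right algebra_simps)
lemma lin_scale: "lin F \<Longrightarrow> lin (\<lambda>x. smultp c (F x))"
  by (simp add: lin_def smultp_add_right mult.commute)
lemma lin_funpow: fixes F :: "('k \<Rightarrow>\<^sub>0 'b::comm_ring_1) \<Rightarrow> ('k \<Rightarrow>\<^sub>0 'b)" shows "lin F \<Longrightarrow> lin (F ^^ k)"
proof (induction k)
  case 0 have "F ^^ 0 = (\<lambda>x. x)" by (simp add: fun_eq_iff)
  thus ?case by (simp add: lin_def)
next
  case (Suc k) thus ?case using lin_comp[of F "F ^^ k"] by (simp add: comp_def)
qed
lemma lin_minus_id: fixes F :: "('k \<Rightarrow>\<^sub>0 'b::comm_ring_1) \<Rightarrow> ('k \<Rightarrow>\<^sub>0 'b)" shows "lin F \<Longrightarrow> lin (minus_id F)"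
  unfolding minus_id_def[abs_def] by (rule lin_minus) (simp_all add: lin_id)

lemma expand_pm: "x = (\<Sum>k\<in>Poly_Mapping.keys x. smultp (Poly_Mapping.lookup x k) (Poly_Mapping.single k 1))"
proof (rule poly_mapping_eqI)
  fix k
  have "(\<Sum>xa\<in>Poly_Mapping.keys x. Poly_Mapping.lookup x xa * (if xa = k then 1 else 0))
     = (\<Sum>xa\<in>Poly_Mapping.keys x. if xa = k then Poly_Mapping.lookup x xa else 0)"
    by (rule sum.cong) auto
  also have "\<dots> = Poly_Mapping.lookup x k"
    by (simp add: sum.delta' in_keys_iff)
  finally show "Poly_Mapping.lookup x k = Poly_Mapping.lookup (\<Sum>k\<in>Poly_Mapping.keys x. smultp (Poly_Mapping.lookup x k) (Poly_Mapping.single k 1)) k"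
    by (simp add: lookup_sum lookup_single when_def)
qed

lemma lin_expand: "lin F \<Longrightarrow> F x = linext (\<lambda>k. F (Poly_Mapping.single k 1)) x"
proof -
  assume F: "lin F"
  have "F x = F (\<Sum>k\<in>Poly_Mapping.keys x. smultp (Poly_Mapping.lookup x k) (Poly_Mapping.single k 1))"
    by (subst expand_pm) simp
  also have "\<dots> = linext (\<lambda>k. F (Poly_Mapping.single k 1)) x"
    by (simp add: lin_sum[OF F] lin_smultp[OF F] linext_def)
  finally show ?thesis .
qed

lemma lin_eqI: "lin F \<Longrightarrow> lin G \<Longrightarrow> (\<And>k. F (Poly_Mapping.single k 1) = G (Poly_Mapping.single k 1)) \<Longrightarrow> F x = G x"
proof -
  assume F: "lin F" and G: "lin G" and e: "\<And>k. F (Poly_Mapping.single k 1) = G (Poly_Mapping.single k 1)"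
  have "F x = linext (\<lambda>k. F (Poly_Mapping.single k 1)) x" by (rule lin_expand[OF F])
  also have "\<dots> = linext (\<lambda>k. G (Poly_Mapping.single k 1)) x" by (simp add: e)
  also have "\<dots> = G x" by (rule lin_expand[OF G, symmetric])
  finally show "F x = G x" .
qed

lemma lin_linext_push: "lin F \<Longrightarrow> F (linext g z) = linext (\<lambda>k. F (g k)) z"
  by (simp add: linext_def lin_sum lin_smultp)

lemma lin_linext_param: "(\<And>c. lin (F c)) \<Longrightarrow> lin (\<lambda>y. linext (\<lambda>c. F c y) z)"
  by (simp add: lin_def linext_fun_add linext_fun_smultp)

lemma linext_linext: "linext f (linext g z) = linext (\<lambda>k. linext f (g k)) z"
  by (rule lin_linext_push[OF lin_linext])

definition rhom :: "('r::comm_ring_1 \<Rightarrow> 'b::comm_ring_1) \<Rightarrow> bool" where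
  "rhom \<iota> \<longleftrightarrow> \<iota> 0 = 0 \<and> \<iota> 1 = 1 \<and> (\<forall>a b. \<iota> (a + b) = \<iota> a + \<iota> b) \<and> (\<forall>a b. \<iota> (a * b) = \<iota> a * \<iota> b)"

lemma rhom_id: "rhom id" by (simp add: rhom_def)
lemma rhom_const: "rhom (\<lambda>r. [:r:])" by (simp add: rhom_def)

context
  fixes \<iota> :: "'r::comm_ring_1 \<Rightarrow> 'b::comm_ring_1"
  assumes hom: "rhom \<iota>"
begin

lemma hom0[simp]: "\<iota> 0 = 0" and hom1[simp]: "\<iota> 1 = 1" and homadd[simp]: "\<iota> (a + b) = \<iota> a + \<iota> b"
  and hommult[simp]: "\<iota> (a * b) = \<iota> a * \<iota> b"
  using hom by (auto simp: rhom_def)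

lemma homsum[simp]: "\<iota> (\<Sum>i\<in>I. f i) = (\<Sum>i\<in>I. \<iota> (f i))"
  by (induction I rule: infinite_finite_induct) auto

lemma lookup_embedc[simp]: "Poly_Mapping.lookup (embedc \<iota> x) k = \<iota> (Poly_Mapping.lookup x k)"
  by (simp add: embedc_def map.rep_eq when_def)

lemma keys_embedc: "Poly_Mapping.keys (embedc \<iota> x) \<subseteq> Poly_Mapping.keys x"
  by (auto simp: in_keys_iff)

lemma embedc_add: "embedc \<iota> (x + y) = embedc \<iota> x + embedc \<iota> y"
  by (rule poly_mapping_eqI) (simp add: lookup_add)
lemma embedc_zero[simp]: "embedc \<iota> 0 = 0"
  by (rule poly_mapping_eqI) simp
lemma embedc_smultp: "embedc \<iota> (smultp c x) = smultp (\<iota> c) (embedc \<iota> x)"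
  by (rule poly_mapping_eqI) simp
lemma embedc_sum: "embedc \<iota> (\<Sum>i\<in>I. f i) = (\<Sum>i\<in>I. embedc \<iota> (f i))"
  by (rule poly_mapping_eqI) (simp add: lookup_sum)
lemma embedc_single[simp]: "embedc \<iota> (Poly_Mapping.single k c) = Poly_Mapping.single k (\<iota> c)"
  by (rule poly_mapping_eqI) (simp add: lookup_single when_def)

lemma embedc_linext: "embedc \<iota> (linext f z) = linext (\<lambda>k. embedc \<iota> (f k)) (embedc \<iota> z)"
proof -
  have "linext (\<lambda>k. embedc \<iota> (f k)) (embedc \<iota> z)
     = (\<Sum>k\<in>Poly_Mapping.keys z. smultp (Poly_Mapping.lookup (embedc \<iota> z) k) (embedc \<iota> (f k)))"
    by (rule linext_superset) (auto simp: keys_embedc)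
  thus ?thesis by (simp add: linext_def embedc_sum embedc_smultp)
qed

lemma lin_transfer:
  assumes F: "lin F" and G: "lin G"
    and e: "\<And>u. G (Poly_Mapping.single u 1) = embedc \<iota> (F (Poly_Mapping.single u 1))"
  shows "G (embedc \<iota> y) = embedc \<iota> (F y)"
proof -
  have "G (embedc \<iota> y) = linext (\<lambda>k. G (Poly_Mapping.single k 1)) (embedc \<iota> y)" by (rule lin_expand[OF G])
  also have "\<dots> = linext (\<lambda>k. embedc \<iota> (F (Poly_Mapping.single k 1))) (embedc \<iota> y)" by (simp add: e)
  also have "\<dots> = embedc \<iota> (linext (\<lambda>k. F (Poly_Mapping.single k 1)) y)" by (simp add: embedc_linext)
  also have "\<dots> = embedc \<iota> (F y)" by (simp add: lin_expand[OF F, symmetric])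
  finally show ?thesis .
qed

end

lemma embedc_id[simp]: "embedc id x = x"
  by (rule poly_mapping_eqI) (simp add: embedc_def map.rep_eq when_def)

lemma lin_Sop: "lin (Sop circ \<iota> \<alpha>)" by (simp add: Sop_def lin_linext)
lemma lin_prepend: "lin (prepend a)" by (simp add: prepend_def[abs_def] lin_linext)
lemma lin_circW: "lin (circW circ \<iota> a)" by (simp add: circW_def[abs_def] lin_linext)
lemma lin_cat: "lin (\<lambda>x. cat x y)" by (simp add: cat_def[abs_def] lin_linext)

lemma Sop_single: "Sop circ \<iota> \<alpha> (Poly_Mapping.single u c) = smultp c (Sword circ \<iota> \<alpha> u)"
  by (simp add: Sop_def)
lemma prepend_single: "prepend a (Poly_Mapping.single u c) = Poly_Mapping.single (a # u) c"
  by (simp add: prepend_def smultp_single)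
lemma circW_Nil: "circW circ \<iota> a (Poly_Mapping.single [] c) = 0"
  by (simp add: circW_def)
lemma circW_Cons: "circW circ \<iota> a (Poly_Mapping.single (b # v) c)
   = smultp c (linext (\<lambda>e. Poly_Mapping.single (e # v) 1) (embedc \<iota> (circ a b)))"
  by (simp add: circW_def)

lemma S_prepend: "Sop circ \<iota> \<alpha> (prepend a x)
   = prepend a (Sop circ \<iota> \<alpha> x) + smultp \<alpha> (circW circ \<iota> a (Sop circ \<iota> \<alpha> x))"
proof (rule lin_eqI[where F="\<lambda>x. Sop circ \<iota> \<alpha> (prepend a x)"
      and G="\<lambda>x. prepend a (Sop circ \<iota> \<alpha> x) + smultp \<alpha> (circW circ \<iota> a (Sop circ \<iota> \<alpha> x))"])
  show "lin (\<lambda>x. Sop circ \<iota> \<alpha> (prepend a x))" by (rule lin_comp[OF lin_Sop lin_prepend])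
  show "lin (\<lambda>x. prepend a (Sop circ \<iota> \<alpha> x) + smultp \<alpha> (circW circ \<iota> a (Sop circ \<iota> \<alpha> x)))"
    by (rule lin_plus[OF lin_comp[OF lin_prepend lin_Sop] lin_scale[OF lin_comp[OF lin_circW lin_Sop]]])
  fix k
  show "Sop circ \<iota> \<alpha> (prepend a (Poly_Mapping.single k 1)) =
         prepend a (Sop circ \<iota> \<alpha> (Poly_Mapping.single k 1)) +
         smultp \<alpha> (circW circ \<iota> a (Sop circ \<iota> \<alpha> (Poly_Mapping.single k 1)))"
    by (simp only: prepend_single Sop_single smultp_1 Sword.simps)
qed

lemma circW_prepend: "circW circ \<iota> a (prepend b y) = linext (\<lambda>c. prepend c y) (embedc \<iota> (circ a b))"
proof (rule lin_eqI[where F="\<lambda>y. circW circ \<iota> a (prepend b y)"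
      and G="\<lambda>y. linext (\<lambda>c. prepend c y) (embedc \<iota> (circ a b))"])
  show "lin (\<lambda>y. circW circ \<iota> a (prepend b y))" by (rule lin_comp[OF lin_circW lin_prepend])
  show "lin (\<lambda>y. linext (\<lambda>c. prepend c y) (embedc \<iota> (circ a b)))"
    by (rule lin_linext_param[OF lin_prepend])
qed (simp add: prepend_single circW_Cons)

lemma circZ_single_left: "circZ circ (Poly_Mapping.single a 1) z = linext (\<lambda>b. circ a b) z"
  by (simp add: circZ_def)
lemma circZ_single_right: "circZ circ z (Poly_Mapping.single b 1) = linext (\<lambda>a. circ a b) z"
  by (simp add: circZ_def)

context
  fixes circ :: "'a \<Rightarrow> 'a \<Rightarrow> ('a \<Rightarrow>\<^sub>0 'r::comm_ring_1)"
    and \<iota> :: "'r \<Rightarrow> 'b::comm_ring_1" and \<alpha> :: 'b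
  assumes hom: "rhom \<iota>"
    and assoc: "\<And>a b c. circZ circ (circ a b) (Poly_Mapping.single c 1)
                        = circZ circ (Poly_Mapping.single a 1) (circ b c)"
begin

abbreviation "S \<equiv> Sop circ \<iota> \<alpha>"
abbreviation "C \<equiv> circW circ \<iota>"
abbreviation "D \<equiv> minus_id (Sop circ \<iota> \<alpha>)"

lemma circW_circW: "C a (C b y) = linext (\<lambda>c. C c y) (embedc \<iota> (circ a b))"
proof (rule lin_eqI[where F="\<lambda>y. C a (C b y)" and G="\<lambda>y. linext (\<lambda>c. C c y) (embedc \<iota> (circ a b))"])
  show "lin (\<lambda>y. C a (C b y))" by (rule lin_comp[OF lin_circW lin_circW])
  show "lin (\<lambda>y. linext (\<lambda>c. C c y) (embedc \<iota> (circ a b)))"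
    by (rule lin_linext_param[OF lin_circW])
  fix k :: "'a list"
  show "C a (C b (Poly_Mapping.single k 1)) = linext (\<lambda>c. C c (Poly_Mapping.single k 1)) (embedc \<iota> (circ a b))"
  proof (cases k)
    case Nil
    thus ?thesis by (simp add: circW_Nil lin_zero[OF lin_circW])
  next
    case (Cons d v)
    define Q where "Q = (\<lambda>z. linext (\<lambda>e. Poly_Mapping.single (e # v) (1::'b)) z)"
    have lQ: "lin Q" unfolding Q_def by (rule lin_linext)
    have "C a (C b (Poly_Mapping.single k 1)) = C a (Q (embedc \<iota> (circ b d)))"
      by (simp add: Cons circW_Cons Q_def)
    also have "\<dots> = linext (\<lambda>e. C a (Poly_Mapping.single (e # v) 1)) (embedc \<iota> (circ b d))"
      unfolding Q_def by (rule lin_linext_push[OF lin_circW])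
    also have "\<dots> = linext (\<lambda>e. Q (embedc \<iota> (circ a e))) (embedc \<iota> (circ b d))"
      by (simp add: circW_Cons Q_def)
    also have "\<dots> = Q (linext (\<lambda>e. embedc \<iota> (circ a e)) (embedc \<iota> (circ b d)))"
      by (rule lin_linext_push[OF lQ, symmetric])
    also have "\<dots> = Q (embedc \<iota> (circZ circ (Poly_Mapping.single a 1) (circ b d)))"
      by (simp add: embedc_linext[OF hom] circZ_single_left)
    also have "\<dots> = Q (embedc \<iota> (circZ circ (circ a b) (Poly_Mapping.single d 1)))"
      by (simp add: assoc)
    also have "\<dots> = Q (linext (\<lambda>c. embedc \<iota> (circ c d)) (embedc \<iota> (circ a b)))"
      by (simp add: embedc_linext[OF hom] circZ_single_right)
    also have "\<dots> = linext (\<lambda>c. Q (embedc \<iota> (circ c d))) (embedc \<iota> (circ a b))"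
      by (rule lin_linext_push[OF lQ])
    also have "\<dots> = linext (\<lambda>c. C c (Poly_Mapping.single k 1)) (embedc \<iota> (circ a b))"
      by (simp add: Cons circW_Cons Q_def)
    finally show ?thesis .
  qed
qed

lemma S_circW: "S (C a x) = C a (S x)"
proof (rule lin_eqI[where F="\<lambda>x. S (C a x)" and G="\<lambda>x. C a (S x)"])
  show "lin (\<lambda>x. S (C a x))" by (rule lin_comp[OF lin_Sop lin_circW])
  show "lin (\<lambda>x. C a (S x))" by (rule lin_comp[OF lin_circW lin_Sop])
  fix k :: "'a list"
  show "S (C a (Poly_Mapping.single k 1)) = C a (S (Poly_Mapping.single k 1))"
  proof (cases k)
    case Nil
    thus ?thesis by (simp add: circW_Nil lin_zero[OF lin_Sop] Sop_single)
  next
    case (Cons b v)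
    let ?z = "embedc \<iota> (circ a b)"
    let ?Sv = "Sword circ \<iota> \<alpha> v"
    have "S (C a (Poly_Mapping.single k 1)) = S (linext (\<lambda>e. Poly_Mapping.single (e # v) 1) ?z)"
      by (simp add: Cons circW_Cons)
    also have "\<dots> = linext (\<lambda>e. S (Poly_Mapping.single (e # v) 1)) ?z"
      by (rule lin_linext_push[OF lin_Sop])
    also have "\<dots> = linext (\<lambda>e. prepend e ?Sv + smultp \<alpha> (C e ?Sv)) ?z"
      by (simp add: Sop_single)
    also have "\<dots> = linext (\<lambda>e. prepend e ?Sv) ?z + smultp \<alpha> (linext (\<lambda>e. C e ?Sv) ?z)"
      by (simp add: linext_fun_add linext_fun_smultp)
    also have "\<dots> = C a (prepend b ?Sv) + smultp \<alpha> (C a (C b ?Sv))"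
      by (simp add: circW_prepend circW_circW)
    also have "\<dots> = C a (S (Poly_Mapping.single k 1))"
      by (simp add: Cons Sop_single lin_add[OF lin_circW] lin_smultp[OF lin_circW])
    finally show ?thesis .
  qed
qed

lemma lin_D: "lin D" by (rule lin_minus_id[OF lin_Sop])

lemma D_prepend: "D (prepend a x) = prepend a (D x) + smultp \<alpha> (C a (x + D x))"
proof -
  have "x + D x = S x" by (simp add: minus_id_def)
  thus ?thesis
    by (simp add: minus_id_def S_prepend lin_diff[OF lin_prepend])
qed

lemma D_circW: "D (C a x) = C a (D x)"
  by (simp add: minus_id_def S_circW lin_diff[OF lin_circW])

lemma Dpow_circW: "(D ^^ k) (C a x) = C a ((D ^^ k) x)"
  by (induction k) (simp_all add: D_circW)

lemma Dpow_prepend: "(D ^^ k) (prepend a x)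
   = prepend a ((D ^^ k) x) + smultp (of_nat k * \<alpha>) (C a ((D ^^ (k - 1)) x + (D ^^ k) x))"
proof (induction k)
  case 0
  thus ?case by simp
next
  case (Suc k)
  have "(D ^^ Suc k) (prepend a x) = D ((D ^^ k) (prepend a x))" by simp
  also have "\<dots> = D (prepend a ((D ^^ k) x)) + smultp (of_nat k * \<alpha>) (D (C a ((D ^^ (k - 1)) x + (D ^^ k) x)))"
    by (simp add: Suc lin_add[OF lin_D] lin_smultp[OF lin_D])
  also have "\<dots> = prepend a ((D ^^ Suc k) x) + smultp \<alpha> (C a ((D ^^ k) x + (D ^^ Suc k) x))
      + smultp (of_nat k * \<alpha>) (C a (D ((D ^^ (k - 1)) x) + (D ^^ Suc k) x))"
    by (simp add: D_prepend D_circW lin_add[OF lin_D])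
  also have "\<dots> = prepend a ((D ^^ Suc k) x) + smultp (of_nat (Suc k) * \<alpha>) (C a ((D ^^ (Suc k - 1)) x + (D ^^ Suc k) x))"
  proof (cases k)
    case 0 thus ?thesis by simp
  next
    case (Suc j)
    have "D ((D ^^ (k - 1)) x) = (D ^^ k) x" using Suc by simp
    thus ?thesis by (simp add: algebra_simps smultp_add_left)
  qed
  finally show ?case .
qed

end


lemma cat_single: "cat (Poly_Mapping.single [c] 1) y = prepend c y"
  by (simp add: cat_def prepend_def)

lemma zword_Cons': "zword (z # zs) = linext (\<lambda>c. prepend c (zword zs)) z"
proof -
  have "zword (z # zs) = cat (linext (\<lambda>c. Poly_Mapping.single [c] 1) z) (zword zs)" by simp
  also have "\<dots> = linext (\<lambda>c. cat (Poly_Mapping.single [c] 1) (zword zs)) z"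
    by (rule lin_linext_push[OF lin_cat])
  finally show ?thesis by (simp add: cat_single)
qed

lemma zword_single: "zword (Poly_Mapping.single a 1 # zs) = prepend a (zword zs)"
  by (simp add: zword_Cons' del: zword.simps(2))

lemma circW_zword: "circW circ id a (zword (z # zs)) = zword (circZ circ (Poly_Mapping.single a 1) z # zs)"
proof -
  have "circW circ id a (zword (z # zs)) = linext (\<lambda>c. circW circ id a (prepend c (zword zs))) z"
    by (simp add: zword_Cons' lin_linext_push[OF lin_circW] del: zword.simps(2))
  also have "\<dots> = linext (\<lambda>c. linext (\<lambda>e. prepend e (zword zs)) (circ a c)) z"
    by (simp add: circW_prepend)
  also have "\<dots> = zword (circZ circ (Poly_Mapping.single a 1) z # zs)"
    by (simp add: zword_Cons' circZ_single_left linext_linext del: zword.simps(2))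
  finally show ?thesis .
qed

lemma zprod_Cons: "bs \<noteq> [] \<Longrightarrow> zprod circ (a # bs) = circZ circ (Poly_Mapping.single a 1) (zprod circ bs)"
  by (cases bs) auto

lemma Rset_def': "r \<in> Rset n \<longleftrightarrow> r \<noteq> [] \<and> sorted_wrt (<) r \<and> hd r = 0 \<and> last r = n \<and> set r \<subseteq> {0..n}"
  by (simp add: Rset_def)

lemma Rset_0: "Rset 0 = {[0]}"
proof -
  have "r \<in> Rset 0 \<longleftrightarrow> r = [0]" for r
  proof
    assume "r \<in> Rset 0"
    hence "set r \<subseteq> {0}" "r \<noteq> []" "sorted_wrt (<) r" by (auto simp: Rset_def)
    thus "r = [0]"
      by (cases r; cases "tl r") auto
  qed (simp add: Rset_def)
  thus ?thesis by blast
qed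

lemma Rset_Cons: "r \<in> Rset n \<Longrightarrow> r = 0 # tl r"
  by (cases r) (auto simp: Rset_def)

lemma Rset_length: "r \<in> Rset n \<Longrightarrow> length r \<le> Suc n"
proof -
  assume "r \<in> Rset n"
  hence "distinct r" "set r \<subseteq> {0..n}" by (auto simp: Rset_def strict_sorted_iff)
  have "card (set r) \<le> card {0..n}" by (rule card_mono) (use \<open>set r \<subseteq> {0..n}\<close> in auto)
  moreover have "length r = card (set r)" using distinct_card[OF \<open>distinct r\<close>] by simp
  ultimately show ?thesis by simp
qed

lemma Rset_tl: "r \<in> Rset n \<Longrightarrow> 0 < n \<Longrightarrow> tl r \<noteq> []"
  by (cases r) (auto simp: Rset_def)

lemma finite_Rset: "finite (Rset n)"
proof (rule finite_subset)
  show "Rset n \<subseteq> {xs. set xs \<subseteq> {0..n} \<and> length xs \<le> Suc n}"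
    using Rset_length by (auto simp: Rset_def)
  show "finite {xs. set xs \<subseteq> {0..n} \<and> length xs \<le> Suc n}"
    by (rule finite_lists_length_le) simp
qed

lemma Rset_r1: "r \<in> Rset n \<Longrightarrow> 0 # map Suc r \<in> Rset (Suc n)"
  by (auto simp: Rset_def sorted_wrt_map last_map)

lemma Rset_r2: "r \<in> Rset n \<Longrightarrow> 0 < n \<Longrightarrow> 0 # map Suc (tl r) \<in> Rset (Suc n)"
proof -
  assume r: "r \<in> Rset n" and n: "0 < n"
  obtain t where t: "r = 0 # t" using Rset_Cons[OF r] by blast
  have "t \<noteq> []" using Rset_tl[OF r n] t by simp
  thus ?thesis using r t by (auto simp: Rset_def sorted_wrt_map last_map)
qed

lemma Rset_Suc_cases:
  assumes r': "r' \<in> Rset (Suc n)"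
  shows "\<exists>r\<in>Rset n. r' = 0 # map Suc r \<or> (0 < n \<and> r' = 0 # map Suc (tl r))"
proof -
  obtain t where t: "r' = 0 # t" using Rset_Cons[OF r'] by blast
  have tne: "t \<noteq> []" using r' t by (auto simp: Rset_def)
  have pos: "\<forall>x\<in>set t. 0 < x" and st: "sorted_wrt (<) t" and lt: "last t = Suc n" and sub: "set t \<subseteq> {0..Suc n}"
    using r' t tne by (auto simp: Rset_def)
  have mS: "map Suc (map (\<lambda>x. x - 1) t) = t" using pos by (induction t) auto
  have "sorted_wrt (\<lambda>x y. x - 1 < y - 1) t"
    by (rule sorted_wrt_mono_rel[OF _ st]) (use pos in auto)
  hence st': "sorted_wrt (<) (map (\<lambda>x. x - 1) t)" by (simp add: sorted_wrt_map)
  obtain y ys where y: "t = y # ys" using tne by (cases t) auto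
  show ?thesis
  proof (cases "y = 1")
    case True
    let ?r = "map (\<lambda>x. x - 1) t"
    have "?r \<in> Rset n" using True y st' lt sub tne by (auto simp: Rset_def last_map)
    moreover have "r' = 0 # map Suc ?r" using t mS by simp
    ultimately show ?thesis by blast
  next
    case False
    let ?r = "0 # map (\<lambda>x. x - 1) t"
    have y2: "2 \<le> y" using False pos y by (cases y) auto
    have "\<forall>x\<in>set t. 0 < x - 1"
    proof
      fix x assume "x \<in> set t"
      hence "x = y \<or> y < x" using st y by auto
      thus "0 < x - 1" using y2 by auto
    qed
    hence "?r \<in> Rset n" using st' lt sub tne by (auto simp: Rset_def last_map)
    moreover have "r' = 0 # map Suc (tl ?r)" using t mS by simp
    moreover have "0 < n"
    proof (rule ccontr)
      assume "\<not> 0 < n"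
      hence "last t = 1" using lt by simp
      have "\<forall>x\<in>set t. y \<le> x" using st y by auto
      hence "y \<le> last t" using tne by simp
      thus False using y2 \<open>last t = 1\<close> by simp
    qed
    ultimately show ?thesis by blast
  qed
qed

lemma Rset_Suc: "0 < n \<Longrightarrow> Rset (Suc n) = (\<lambda>r. 0 # map Suc r) ` Rset n \<union> (\<lambda>r. 0 # map Suc (tl r)) ` Rset n"
  using Rset_Suc_cases[of _ n] Rset_r1 Rset_r2 by blast

lemma Rset_1: "Rset (Suc 0) = {[0, 1]}"
proof -
  have "Rset (Suc 0) = (\<lambda>r. 0 # map Suc r) ` Rset 0"
    using Rset_Suc_cases[of _ 0] Rset_r1[of _ 0] by blast
  thus ?thesis by (simp add: Rset_0)
qed

lemma sigma_r1: "r \<in> Rset n \<Longrightarrow> sigma (Suc n) (0 # map Suc r) = sigma n r"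
  using Rset_Cons[of r n] by (cases r) (auto simp: sigma_def)

lemma sigma_r2: "r \<in> Rset n \<Longrightarrow> sigma (Suc n) (0 # map Suc (tl r)) = Suc (sigma n r)"
  using Rset_length[of r n] Rset_Cons[of r n] by (cases r) (auto simp: sigma_def)

lemma sigma_le: "sigma n r \<le> n" by (simp add: sigma_def)

lemma upt0_Suc: "[0..<Suc m] = 0 # map Suc [0..<m]"
proof -
  have "[0..<Suc m] = 0 # [Suc 0..<Suc m]" by (rule upt_conv_Cons) simp
  thus ?thesis by (simp only: map_Suc_upt)
qed

lemma Con_r1:
  assumes r: "r \<in> Rset (length w)"
  shows "Con circ (0 # map Suc r) (a # w) = prepend a (Con circ r w)"
proof -
  obtain t where t: "r = 0 # t" using Rset_Cons[OF r] by blast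
  let ?r' = "0 # map Suc r"
  define f' where "f' = (\<lambda>i. zprod circ (take (?r' ! (i+1) - ?r' ! i) (drop (?r' ! i) (a # w))))"
  define f where "f = (\<lambda>i. zprod circ (take (r ! (i+1) - r ! i) (drop (r ! i) w)))"
  have ups: "[0..<length r] = 0 # map Suc [0..<length r - 1]" using t by (simp only: upt0_Suc length_Cons diff_Suc_1)
  have "Con circ ?r' (a # w) = zword (map f' [0..<length r])"
    by (simp add: Con_def f'_def del: upt_Suc)
  also have "\<dots> = zword (f' 0 # map (\<lambda>i. f' (Suc i)) [0..<length r - 1])"
    by (subst ups) (simp add: comp_def del: upt_Suc zword.simps(2))
  also have "f' 0 = Poly_Mapping.single a 1" using t by (simp add: f'_def)
  also have "map (\<lambda>i. f' (Suc i)) [0..<length r - 1] = map f [0..<length r - 1]"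
    by (rule map_cong) (auto simp: f'_def f_def nth_map)
  also have "zword (Poly_Mapping.single a 1 # map f [0..<length r - 1]) = prepend a (Con circ r w)"
    by (simp add: zword_single Con_def f_def del: upt_Suc zword.simps(2))
  finally show ?thesis .
qed

lemma Con_r2:
  assumes r: "r \<in> Rset (length w)" and w: "w \<noteq> []"
  shows "Con circ (0 # map Suc (tl r)) (a # w) = circW circ id a (Con circ r w)"
proof -
  obtain t where t: "r = 0 # t" using Rset_Cons[OF r] by blast
  have tne: "t \<noteq> []" using Rset_tl[OF r] t w by simp
  obtain r1 rest where t1: "t = r1 # rest" using tne by (cases t) auto
  have r1pos: "0 < r1" using r t t1 by (auto simp: Rset_def)
  have r1le: "r1 \<le> length w" using r t t1 by (auto simp: Rset_def)
  let ?r' = "0 # map Suc t"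
  define f' where "f' = (\<lambda>i. zprod circ (take (?r' ! (i+1) - ?r' ! i) (drop (?r' ! i) (a # w))))"
  define f where "f = (\<lambda>i. zprod circ (take (r ! (i+1) - r ! i) (drop (r ! i) w)))"
  have ups: "[0..<length t] = 0 # map Suc [0..<length t - 1]" using t1 by (simp only: upt0_Suc length_Cons diff_Suc_1)
  have "Con circ ?r' (a # w) = zword (map f' [0..<length t])"
    using t by (simp add: Con_def f'_def del: upt_Suc)
  also have "\<dots> = zword (f' 0 # map (\<lambda>i. f' (Suc i)) [0..<length t - 1])"
    by (subst ups) (simp add: comp_def del: upt_Suc zword.simps(2))
  also have "f' 0 = circZ circ (Poly_Mapping.single a 1) (f 0)"
  proof -
    have "take r1 w \<noteq> []" using r1pos w by simp
    thus ?thesis using t t1 by (simp add: f'_def f_def zprod_Cons)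
  qed
  also have "map (\<lambda>i. f' (Suc i)) [0..<length t - 1] = map (\<lambda>i. f (Suc i)) [0..<length t - 1]"
    by (rule map_cong) (auto simp: f'_def f_def nth_map t)
  also have "zword (circZ circ (Poly_Mapping.single a 1) (f 0) # map (\<lambda>i. f (Suc i)) [0..<length t - 1])
      = circW circ id a (zword (f 0 # map (\<lambda>i. f (Suc i)) [0..<length t - 1]))"
    by (simp only: circW_zword)
  also have "f 0 # map (\<lambda>i. f (Suc i)) [0..<length t - 1] = map f [0..<length r - 1]"
    using t ups by (simp del: upt_Suc)
  also have "zword (map f [0..<length r - 1]) = Con circ r w"
    by (simp add: Con_def f_def del: upt_Suc)
  finally show ?thesis using t by (simp add: id_def)
qed


fun cc :: "nat \<Rightarrow> nat \<Rightarrow> int" where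
  "cc k 0 = (if k = 0 then 1 else 0)"
| "cc k (Suc m) = int k * (cc (k - 1) m + cc k m)"

lemma cc_zero: "m < k \<Longrightarrow> cc k m = 0"
  by (induction m arbitrary: k) auto

lemma Rset_disj: "(\<lambda>r. 0 # map Suc r) ` Rset n \<inter> (\<lambda>r. 0 # map Suc (tl r)) ` Rset n = {}"
proof -
  have "0 # map Suc r \<noteq> 0 # map Suc (tl s)" if r: "r \<in> Rset n" and s: "s \<in> Rset n" for r s
  proof -
    obtain t where t: "r = 0 # t" using Rset_Cons[OF r] by blast
    obtain u where u: "s = 0 # u" using Rset_Cons[OF s] by blast
    have "\<forall>x\<in>set u. 0 < x" using s u by (auto simp: Rset_def)
    thus ?thesis using t u by (cases u) auto
  qed
  thus ?thesis by blast
qed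

lemma inj_r1: "inj_on (\<lambda>r. 0 # map Suc r) A"
  by (auto simp: inj_on_def)

lemma inj_r2: "inj_on (\<lambda>r. 0 # map Suc (tl r)) (Rset n)"
proof (rule inj_onI)
  fix r s assume "r \<in> Rset n" "s \<in> Rset n" "0 # map Suc (tl r) = 0 # map Suc (tl s)"
  thus "r = s" using Rset_Cons[of r n] Rset_Cons[of s n] by (metis list.inj_map_strong list.inject nat.inject)
qed

context
  fixes circ :: "'a \<Rightarrow> 'a \<Rightarrow> ('a \<Rightarrow>\<^sub>0 'r::comm_ring_1)"
    and \<iota> :: "'r \<Rightarrow> 'b::comm_ring_1" and \<alpha> :: 'b
  assumes hom: "rhom \<iota>"
    and assoc: "\<And>a b c. circZ circ (circ a b) (Poly_Mapping.single c 1)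
                        = circZ circ (Poly_Mapping.single a 1) (circ b c)"
begin

lemma prepend_embedc: "prepend a (embedc \<iota> y) = embedc \<iota> (prepend a y)"
  by (rule lin_transfer[OF hom lin_prepend lin_prepend]) (simp add: prepend_single embedc_single[OF hom] hom1[OF hom])

lemma circW_embedc: "circW circ \<iota> a (embedc \<iota> y) = embedc \<iota> (circW circ id a y)"
proof (rule lin_transfer[OF hom lin_circW lin_circW])
  fix u :: "'a list"
  show "circW circ \<iota> a (Poly_Mapping.single u 1) = embedc \<iota> (circW circ id a (Poly_Mapping.single u 1))"
    by (cases u) (simp_all add: circW_Nil circW_Cons embedc_zero[OF hom] embedc_linext[OF hom] embedc_single[OF hom] hom1[OF hom])
qed

lemma Dword:
  "(minus_id (Sop circ \<iota> \<alpha>) ^^ k) (Poly_Mapping.single w 1)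
   = (\<Sum>r\<in>Rset (length w). smultp (\<alpha> ^ sigma (length w) r * of_int (cc k (sigma (length w) r)))
                                     (embedc \<iota> (Con circ r w)))"
proof (induction w arbitrary: k)
  case Nil
  have D0: "minus_id (Sop circ \<iota> \<alpha>) (Poly_Mapping.single [] 1) = 0"
    by (simp add: minus_id_def Sop_single)
  have "(minus_id (Sop circ \<iota> \<alpha>) ^^ k) (Poly_Mapping.single [] 1) = (if k = 0 then Poly_Mapping.single [] 1 else 0)"
  proof (cases k)
    case (Suc j)
    thus ?thesis using lin_zero[OF lin_funpow[OF lin_D[OF hom assoc]], of j \<alpha>]
      by (simp add: funpow_Suc_right D0 del: funpow.simps)
  qed simp
  moreover have "Con circ [0] [] = Poly_Mapping.single [] 1" by (simp add: Con_def)
  ultimately show ?case by (simp add: Rset_0 sigma_def embedc_single[OF hom] hom1[OF hom])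
next
  case (Cons a w)
  let ?D = "minus_id (Sop circ \<iota> \<alpha>)"
  let ?n = "length w"
  let ?E = "\<lambda>r. embedc \<iota> (Con circ r w)"
  let ?E' = "\<lambda>r. embedc \<iota> (Con circ r (a # w))"
  let ?co = "\<lambda>k r. \<alpha> ^ sigma ?n r * of_int (cc k (sigma ?n r))"
  have IH: "(?D ^^ j) (Poly_Mapping.single w 1) = (\<Sum>r\<in>Rset ?n. smultp (?co j r) (?E r))" for j
    by (rule Cons.IH)
  have "(?D ^^ k) (Poly_Mapping.single (a # w) 1) = (?D ^^ k) (prepend a (Poly_Mapping.single w 1))"
    by (simp add: prepend_single)
  also have "\<dots> = prepend a ((?D ^^ k) (Poly_Mapping.single w 1))
      + smultp (of_nat k * \<alpha>) (circW circ \<iota> a ((?D ^^ (k - 1)) (Poly_Mapping.single w 1) + (?D ^^ k) (Poly_Mapping.single w 1)))"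
    by (rule Dpow_prepend[OF hom assoc])
  also have "\<dots> = (\<Sum>r\<in>Rset ?n. smultp (?co k r) (prepend a (?E r)))
      + (\<Sum>r\<in>Rset ?n. smultp (of_nat k * \<alpha> * (?co (k - 1) r + ?co k r)) (circW circ \<iota> a (?E r)))"
  proof -
    have A: "prepend a (\<Sum>r\<in>Rset ?n. smultp (?co k r) (?E r)) = (\<Sum>r\<in>Rset ?n. smultp (?co k r) (prepend a (?E r)))"
      by (simp add: lin_sum[OF lin_prepend] lin_smultp[OF lin_prepend])
    have B: "(\<Sum>r\<in>Rset ?n. smultp (?co (k - 1) r) (?E r)) + (\<Sum>r\<in>Rset ?n. smultp (?co k r) (?E r))
        = (\<Sum>r\<in>Rset ?n. smultp (?co (k - 1) r + ?co k r) (?E r))"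
      by (simp add: sum.distrib[symmetric] smultp_add_left)
    have Cc: "smultp (of_nat k * \<alpha>) (circW circ \<iota> a (\<Sum>r\<in>Rset ?n. smultp (?co (k - 1) r + ?co k r) (?E r)))
        = (\<Sum>r\<in>Rset ?n. smultp (of_nat k * \<alpha> * (?co (k - 1) r + ?co k r)) (circW circ \<iota> a (?E r)))"
      by (simp add: lin_sum[OF lin_circW] lin_smultp[OF lin_circW] smultp_sum_right)
    show ?thesis by (simp only: IH A B Cc)
  qed
  also have "(\<Sum>r\<in>Rset ?n. smultp (?co k r) (prepend a (?E r))) = (\<Sum>r\<in>Rset ?n. smultp (?co k r) (?E' (0 # map Suc r)))"
    by (rule sum.cong) (simp_all add: prepend_embedc Con_r1)
  finally have eq: "(?D ^^ k) (Poly_Mapping.single (a # w) 1) = (\<Sum>r\<in>Rset ?n. smultp (?co k r) (?E' (0 # map Suc r)))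
      + (\<Sum>r\<in>Rset ?n. smultp (of_nat k * \<alpha> * (?co (k - 1) r + ?co k r)) (circW circ \<iota> a (?E r)))" .
  let ?co' = "\<lambda>r. \<alpha> ^ sigma (Suc ?n) r * of_int (cc k (sigma (Suc ?n) r))"
  have part1: "(\<Sum>r\<in>Rset ?n. smultp (?co k r) (?E' (0 # map Suc r)))
      = (\<Sum>r'\<in>(\<lambda>r. 0 # map Suc r) ` Rset ?n. smultp (?co' r') (?E' r'))"
    by (simp add: sum.reindex[OF inj_r1] sigma_r1)
  show ?case
  proof (cases "w = []")
    case True
    have "circW circ \<iota> a (?E [0]) = 0" using True by (simp add: Con_def embedc_single[OF hom] hom1[OF hom] circW_Nil)
    hence "(?D ^^ k) (Poly_Mapping.single (a # w) 1) = (\<Sum>r\<in>Rset ?n. smultp (?co k r) (?E' (0 # map Suc r)))"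
      using eq True by (simp add: Rset_0)
    also have "\<dots> = (\<Sum>r'\<in>Rset (Suc ?n). smultp (?co' r') (?E' r'))"
      using True by (simp add: part1 Rset_1 Rset_0 sigma_def)
    finally show ?thesis by simp
  next
    case False
    hence n: "0 < ?n" by simp
    have "(\<Sum>r\<in>Rset ?n. smultp (of_nat k * \<alpha> * (?co (k - 1) r + ?co k r)) (circW circ \<iota> a (?E r)))
        = (\<Sum>r\<in>Rset ?n. smultp (?co' (0 # map Suc (tl r))) (?E' (0 # map Suc (tl r))))"
    proof (rule sum.cong)
      fix r assume r: "r \<in> Rset ?n"
      have "circW circ \<iota> a (?E r) = ?E' (0 # map Suc (tl r))"
        by (simp add: circW_embedc Con_r2[OF r False])
      moreover have "of_nat k * \<alpha> * (?co (k - 1) r + ?co k r) = ?co' (0 # map Suc (tl r))"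
        by (simp add: sigma_r2[OF r] algebra_simps)
      ultimately show "smultp (of_nat k * \<alpha> * (?co (k - 1) r + ?co k r)) (circW circ \<iota> a (?E r))
          = smultp (?co' (0 # map Suc (tl r))) (?E' (0 # map Suc (tl r)))" by simp
    qed simp
    also have "\<dots> = (\<Sum>r'\<in>(\<lambda>r. 0 # map Suc (tl r)) ` Rset ?n. smultp (?co' r') (?E' r'))"
      by (simp add: sum.reindex[OF inj_r2])
    finally have part2: "(\<Sum>r\<in>Rset ?n. smultp (of_nat k * \<alpha> * (?co (k - 1) r + ?co k r)) (circW circ \<iota> a (?E r)))
        = (\<Sum>r'\<in>(\<lambda>r. 0 # map Suc (tl r)) ` Rset ?n. smultp (?co' r') (?E' r'))" .
    have "(\<Sum>r'\<in>Rset (Suc ?n). smultp (?co' r') (?E' r'))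
       = (\<Sum>r'\<in>(\<lambda>r. 0 # map Suc r) ` Rset ?n. smultp (?co' r') (?E' r'))
       + (\<Sum>r'\<in>(\<lambda>r. 0 # map Suc (tl r)) ` Rset ?n. smultp (?co' r') (?E' r'))"
      unfolding Rset_Suc[OF n] by (rule sum.union_disjoint) (simp_all add: finite_Rset Rset_disj)
    thus ?thesis using eq part1 part2 by simp
  qed
qed

end


lemma ninv_mult:
  assumes Q: "\<And>n::nat. 0 < n \<Longrightarrow> \<exists>y::'b::comm_ring_1. of_nat n * y = 1" and n: "0 < n"
  shows "of_nat n * (ninv n :: 'b) = 1"
proof -
  obtain y :: 'b where y: "of_nat n * y = 1" using Q[OF n] by blast
  have "ninv n = y" unfolding ninv_def
  proof (rule the_equality)
    fix y' :: 'b assume y': "of_nat n * y' = 1"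
    have "y' = y' * (of_nat n * y)" using y by simp
    also have "\<dots> = (of_nat n * y') * y" by (simp add: algebra_simps)
    finally show "y' = y" using y' by simp
  qed (rule y)
  thus ?thesis using y by simp
qed

lemma telescope: "(\<Sum>k\<in>{1..K}. (-1) ^ (k - 1) * (g (k - 1) + g k)) = g 0 - (-1) ^ K * (g K :: int)"
proof (induction K)
  case 0 thus ?case by simp
next
  case (Suc K)
  have "(\<Sum>k\<in>{1..Suc K}. (-1) ^ (k - 1) * (g (k - 1) + g k)) = (\<Sum>k\<in>{1..K}. (-1) ^ (k - 1) * (g (k - 1) + g k)) + (-1) ^ K * (g K + g (Suc K))"
    by (simp add: sum.cl_ivl_Suc)
  also have "\<dots> = g 0 - (-1) ^ Suc K * g (Suc K)" using Suc by (simp add: algebra_simps)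
  finally show ?case .
qed

lemma logsum:
  assumes Q: "\<And>n::nat. 0 < n \<Longrightarrow> \<exists>y::'b::comm_ring_1. of_nat n * y = 1" and mK: "m \<le> K"
  shows "(\<Sum>k\<in>{1..K}. (-1) ^ (k - 1) * ninv k * of_int (cc k m)) = (if m = 1 then 1 else (0::'b))"
proof (cases m)
  case 0
  thus ?thesis by simp
next
  case (Suc m')
  have "(\<Sum>k\<in>{1..K}. (-1) ^ (k - 1) * ninv k * of_int (cc k m) :: 'b)
      = (\<Sum>k\<in>{1..K}. of_int ((-1) ^ (k - 1) * (cc (k - 1) m' + cc k m')))"
  proof (rule sum.cong)
    fix k assume "k \<in> {1..K}"
    hence k: "0 < k" by simp
    have "(-1) ^ (k - 1) * ninv k * of_int (cc k m) = (-1) ^ (k - 1) * (of_nat k * ninv k) * (of_int (cc (k - 1) m' + cc k m') :: 'b)"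
      using Suc by (simp add: algebra_simps)
    also have "\<dots> = of_int ((-1) ^ (k - 1) * (cc (k - 1) m' + cc k m'))"
      using ninv_mult[OF Q k] by simp
    finally show "(-1) ^ (k - 1) * ninv k * of_int (cc k m) = (of_int ((-1) ^ (k - 1) * (cc (k - 1) m' + cc k m')) :: 'b)" .
  qed simp
  also have "\<dots> = of_int (cc 0 m' - (-1) ^ K * cc K m')"
    by (simp only: of_int_sum[symmetric] telescope[of "\<lambda>k. cc k m'"])
  also have "cc K m' = 0" using Suc mK by (simp add: cc_zero)
  finally show ?thesis using Suc by (cases m') simp_all
qed

context
  fixes circ :: "'a \<Rightarrow> 'a \<Rightarrow> ('a \<Rightarrow>\<^sub>0 'r::comm_ring_1)"
    and \<iota> :: "'r \<Rightarrow> 'b::comm_ring_1" and \<alpha> :: 'b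
  assumes hom: "rhom \<iota>"
    and assoc: "\<And>a b c. circZ circ (circ a b) (Poly_Mapping.single c 1)
                        = circZ circ (Poly_Mapping.single a 1) (circ b c)"
begin

lemma Dword_zero: "length w < k \<Longrightarrow> (minus_id (Sop circ \<iota> \<alpha>) ^^ k) (Poly_Mapping.single w 1) = 0"
  by (simp add: Dword[OF hom assoc] cc_zero[OF le_less_trans[OF sigma_le]])

lemma finite_log_terms: "finite (log_terms (Sop circ \<iota> \<alpha>) x)"
proof -
  let ?D = "minus_id (Sop circ \<iota> \<alpha>)"
  define N where "N = Max (insert 0 (length ` Poly_Mapping.keys x))"
  have "log_terms (Sop circ \<iota> \<alpha>) x \<subseteq> {..N}"
  proof
    fix k assume k: "k \<in> log_terms (Sop circ \<iota> \<alpha>) x"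
    show "k \<in> {..N}"
    proof (rule ccontr)
      assume "k \<notin> {..N}"
      hence kN: "N < k" by simp
      have "(?D ^^ k) x = linext (\<lambda>u. (?D ^^ k) (Poly_Mapping.single u 1)) x"
        by (rule lin_expand[OF lin_funpow[OF lin_D[OF hom assoc]]])
      also have "\<dots> = (\<Sum>u\<in>Poly_Mapping.keys x. smultp (Poly_Mapping.lookup x u) ((?D ^^ k) (Poly_Mapping.single u 1)))"
        by (simp add: linext_def)
      also have "\<dots> = 0"
      proof (rule sum.neutral, rule ballI)
        fix u assume u: "u \<in> Poly_Mapping.keys x"
        have "length u \<le> N" unfolding N_def using u by (intro Max_ge) auto
        thus "smultp (Poly_Mapping.lookup x u) ((?D ^^ k) (Poly_Mapping.single u 1)) = 0"
          using kN by (simp add: Dword_zero)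
      qed
      finally show False using k by (simp add: log_terms_def)
    qed
  qed
  thus ?thesis by (rule finite_subset) simp
qed

lemma logop_word:
  assumes Q: "\<And>n::nat. 0 < n \<Longrightarrow> \<exists>y::'b. of_nat n * y = 1"
  shows "logop (Sop circ \<iota> \<alpha>) (Poly_Mapping.single w 1)
    = (\<Sum>r\<in>{r\<in>Rset (length w). sigma (length w) r = 1}. smultp \<alpha> (embedc \<iota> (Con circ r w)))"
proof -
  let ?D = "minus_id (Sop circ \<iota> \<alpha>)"
  let ?n = "length w"
  let ?T = "\<lambda>k. (?D ^^ k) (Poly_Mapping.single w 1)"
  let ?E = "\<lambda>r. embedc \<iota> (Con circ r w)"
  let ?LT = "log_terms (Sop circ \<iota> \<alpha>) (Poly_Mapping.single w 1)"
  have sub: "?LT \<subseteq> {1..?n}"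
  proof
    fix k assume k: "k \<in> ?LT"
    hence "1 \<le> k" "?T k \<noteq> 0" by (auto simp: log_terms_def)
    thus "k \<in> {1..?n}" using Dword_zero[of w k] by (cases "?n < k") auto
  qed
  have "logop (Sop circ \<iota> \<alpha>) (Poly_Mapping.single w 1) = (\<Sum>k\<in>?LT. smultp ((-1) ^ (k - 1) * ninv k) (?T k))"
    by (simp add: logop_def)
  also have "\<dots> = (\<Sum>k\<in>{1..?n}. smultp ((-1) ^ (k - 1) * ninv k) (?T k))"
    by (rule sum.mono_neutral_left) (use sub in \<open>auto simp: log_terms_def\<close>)
  also have "\<dots> = (\<Sum>k\<in>{1..?n}. \<Sum>r\<in>Rset ?n. smultp ((-1) ^ (k - 1) * ninv k * (\<alpha> ^ sigma ?n r * of_int (cc k (sigma ?n r)))) (?E r))"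
    by (simp add: Dword[OF hom assoc] smultp_sum_right)
  also have "\<dots> = (\<Sum>r\<in>Rset ?n. \<Sum>k\<in>{1..?n}. smultp ((-1) ^ (k - 1) * ninv k * (\<alpha> ^ sigma ?n r * of_int (cc k (sigma ?n r)))) (?E r))"
    by (rule sum.swap)
  also have "\<dots> = (\<Sum>r\<in>Rset ?n. smultp (\<alpha> ^ sigma ?n r * (\<Sum>k\<in>{1..?n}. (-1) ^ (k - 1) * ninv k * of_int (cc k (sigma ?n r)))) (?E r))"
    by (simp add: smultp_sum_left[symmetric] sum_distrib_left algebra_simps)
  also have "\<dots> = (\<Sum>r\<in>Rset ?n. if sigma ?n r = 1 then smultp \<alpha> (?E r) else 0)"
  proof (rule sum.cong)
    fix r assume "r \<in> Rset ?n"
    have L: "(\<Sum>k\<in>{1..?n}. (-1) ^ (k - 1) * ninv k * of_int (cc k (sigma ?n r))) = (if sigma ?n r = 1 then 1 else (0::'b))"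
      by (rule logsum[OF Q sigma_le])
    show "smultp (\<alpha> ^ sigma ?n r * (\<Sum>k\<in>{1..?n}. (-1) ^ (k - 1) * ninv k * of_int (cc k (sigma ?n r)))) (?E r)
        = (if sigma ?n r = 1 then smultp \<alpha> (?E r) else 0)"
      by (simp only: L) simp
  qed simp
  also have "\<dots> = (\<Sum>r\<in>{r\<in>Rset ?n. sigma ?n r = 1}. smultp \<alpha> (?E r))"
    by (simp add: sum.inter_filter finite_Rset)
  finally show ?thesis .
qed

end

theorem proposition3p3:
  fixes circ :: "'a \<Rightarrow> 'a \<Rightarrow> ('a \<Rightarrow>\<^sub>0 'r::comm_ring_1)"
  assumes Qalg: "\<And>n::nat. 0 < n \<Longrightarrow> \<exists>y::'r. of_nat n * y = 1"
    and comm: "\<And>a b. circ a b = circ b a"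
    and assoc: "\<And>a b c. circZ circ (circ a b) (Poly_Mapping.single c 1)
                        = circZ circ (Poly_Mapping.single a 1) (circ b c)"
  shows "(\<forall>x. finite (log_terms (Sop circ (\<lambda>r. [:r:]) [:0, 1:]) x))
    \<and> (\<forall>w. logop (Sop circ (\<lambda>r. [:r:]) [:0, 1:]) (Poly_Mapping.single w 1)
            = smultp [:0, 1:] (embedc (\<lambda>r. [:r:])
                 (\<Sum>r\<in>{r \<in> Rset (length w). sigma (length w) r = 1}. Con circ r w))
        \<and> logop (Sop circ (\<lambda>r. [:r:]) [:0, 1:]) (Poly_Mapping.single w 1)
            = smultp [:0, 1:] (embedc (\<lambda>r. [:r:]) (logop (Sop circ id 1) (Poly_Mapping.single w 1))))"
proof -
  have Qp: "\<exists>y::'r poly. of_nat n * y = 1" if n: "0 < n" for n :: nat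
  proof -
    obtain y :: 'r where y: "of_nat n * y = 1" using Qalg[OF n] by blast
    have "of_nat n * [:y:] = [:of_nat n * y:]" by (simp add: of_nat_poly)
    also have "\<dots> = 1" using y by (metis one_pCons)
    finally show ?thesis by blast
  qed
  have c2: "logop (Sop circ (\<lambda>r. [:r:]) [:0, 1:]) (Poly_Mapping.single w 1)
            = smultp [:0, 1:] (embedc (\<lambda>r. [:r:])
                 (\<Sum>r\<in>{r \<in> Rset (length w). sigma (length w) r = 1}. Con circ r w))" for w
    by (simp add: logop_word[OF rhom_const assoc Qp] embedc_sum[OF rhom_const] smultp_sum_right)
  have c3: "logop (Sop circ id 1) (Poly_Mapping.single w 1)
        = (\<Sum>r\<in>{r \<in> Rset (length w). sigma (length w) r = 1}. Con circ r w)" for w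
    by (simp add: logop_word[OF rhom_id assoc Qalg])
  show ?thesis
    using finite_log_terms[OF rhom_const assoc] c2 c3 by simp
qed

end
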